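(* Let $(c(t))_{t\in\mathbb{R}}$ be a bounded complex-valued cosine function (i.e. $c:\mathbb{R}\to\mathbb{C}$ bounded with $c(0)=1$ and $c(s+t)+c(s-t)=2c(s)c(t)$ for all $s,t\in\mathbb{R}$) which is discontinuous. Then for every $\alpha\in[-1,1]$ there exists a sequence $(t_n)_{n\ge1}$ of positive real numbers such that $\lim_{n\to\infty}t_n=0$ and $\lim_{n\to\infty}c(t_n)=\alpha$. *)

theory Defs
  imports "HOL-Analysis.Analysis"
begin

definition cosine_function :: "(real \<Rightarrow> complex) \<Rightarrow> bool" where
  "cosine_function c \<longleftrightarrow> c 0 = 1 \<and> (\<forall>s t. c (s + t) + c (s - t) = 2 * c s * c t)"

end

theory Submission
  imports Defs
begin

lemma cis_cont_pt: "\<exists>d>0. \<forall>x. \<bar>x - y\<bar> < d \<longrightarrow> norm (cis x - cis y) < (e::real)" if "e > 0"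
proof -
  have "continuous_on UNIV cis" by (intro continuous_intros)
  then show ?thesis using that unfolding continuous_on_iff dist_norm by (metis UNIV_I real_norm_def)
qed

lemma lim_from_bound:
  fixes X :: "nat \<Rightarrow> 'a::real_normed_vector"
  assumes "\<And>k. norm (X k - L) < 1 / (real k + 1)"
  shows "X \<longlonglongrightarrow> L"
proof -
  have "(\<lambda>k. X k - L) \<longlonglongrightarrow> 0"
  proof (rule Lim_null_comparison)
    show "\<forall>\<^sub>F k in sequentially. norm (X k - L) \<le> inverse (real (Suc k))"
      using assms by (auto intro!: always_eventually less_imp_le simp: field_simps)
    show "(\<lambda>k. inverse (real (Suc k))) \<longlonglongrightarrow> 0" by (rule LIMSEQ_inverse_real_of_nat)
  qed
  then show ?thesis by (simp add: LIM_zero_cancel)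
qed

lemma small_index: "d > 0 \<Longrightarrow> \<exists>N::nat. 1 / (real N + 1) < d"
  using reals_Archimedean[of d] by (metis add.commute inverse_eq_divide of_nat_Suc)

definition clus :: "(real \<Rightarrow> complex) \<Rightarrow> complex set" where
  "clus ch = {w. \<forall>d>0. \<forall>e>0. \<exists>t. \<bar>t\<bar> < d \<and> norm (ch t - w) < e}"

context
  fixes ch :: "real \<Rightarrow> complex"
  assumes hom: "\<And>x y. ch (x + y) = ch x * ch y"
    and nrm: "\<And>x. norm (ch x) = 1"
begin

lemma chi0: "ch 0 = 1"
proof -
  have "ch 0 * 1 = ch 0 * ch 0" using hom[of 0 0] by simp
  moreover have "ch 0 \<noteq> 0" using nrm[of 0] by auto
  ultimately show ?thesis by (metis mult_left_cancel)
qed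

lemma chi_neg: "ch (-x) = cnj (ch x)"
proof -
  have "ch x * ch (-x) = 1" using hom[of x "-x"] chi0 by simp
  moreover have "ch x * cnj (ch x) = 1" using complex_norm_square[of "ch x"] nrm[of x] by simp
  moreover have "ch x \<noteq> 0" using nrm[of x] by auto
  ultimately show ?thesis by (metis mult_left_cancel)
qed

lemma chi_pow: "ch (real n * x) = ch x ^ n"
proof (induction n)
  case 0 then show ?case by (simp add: chi0)
next
  case (Suc n)
  have "ch (real (Suc n) * x) = ch (x + real n * x)" by (simp add: algebra_simps)
  also have "\<dots> = ch x * ch x ^ n" using Suc by (simp add: hom)
  finally show ?case by simp
qed

lemma clusE: "w \<in> clus ch \<Longrightarrow> d > 0 \<Longrightarrow> e > 0 \<Longrightarrow> \<exists>t. \<bar>t\<bar> < d \<and> norm (ch t - w) < e"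
  by (simp add: clus_def)

lemma clus_norm: "w \<in> clus ch \<Longrightarrow> norm w = 1"
proof (rule ccontr)
  assume w: "w \<in> clus ch" and ne: "norm w \<noteq> 1"
  then obtain t where "norm (ch t - w) < \<bar>norm w - 1\<bar>"
    using clusE[OF w, of 1 "\<bar>norm w - 1\<bar>"] by auto
  moreover have "\<bar>norm w - 1\<bar> \<le> norm (ch t - w)"
    using nrm[of t] norm_triangle_ineq3[of w "ch t"] by (simp add: norm_minus_commute)
  ultimately show False by simp
qed

lemma clus_closed:
  assumes "\<And>e. e > 0 \<Longrightarrow> \<exists>v\<in>clus ch. norm (v - w) < e"
  shows "w \<in> clus ch"
  unfolding clus_def
proof (intro CollectI allI impI)
  fix d e :: real assume d: "d > 0" and e: "e > 0"
  obtain v where v: "v \<in> clus ch" "norm (v - w) < e/2" using assms[of "e/2"] e by auto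
  obtain t where t: "\<bar>t\<bar> < d" "norm (ch t - v) < e/2"
    using clusE[OF v(1), of d "e/2"] d e by auto
  have "norm (ch t - w) \<le> norm (ch t - v) + norm (v - w)" using norm_triangle_ineq[of "ch t - v" "v - w"] by simp
  then show "\<exists>t. \<bar>t\<bar> < d \<and> norm (ch t - w) < e" using t v by (intro exI[of _ t]) auto
qed

lemma clus_mult:
  assumes a: "a \<in> clus ch" and b: "b \<in> clus ch"
  shows "a * b \<in> clus ch"
  unfolding clus_def
proof (intro CollectI allI impI)
  fix d e :: real assume d: "d > 0" and e: "e > 0"
  obtain t1 where t1: "\<bar>t1\<bar> < d/2" "norm (ch t1 - a) < e/2"
    using clusE[OF a, of "d/2" "e/2"] d e by auto
  obtain t2 where t2: "\<bar>t2\<bar> < d/2" "norm (ch t2 - b) < e/2"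
    using clusE[OF b, of "d/2" "e/2"] d e by auto
  have nb: "norm b = 1" using b clus_norm by blast
  have eq: "ch (t1 + t2) - a * b = ch t1 * (ch t2 - b) + (ch t1 - a) * b"
    by (simp add: hom algebra_simps)
  have "norm (ch (t1 + t2) - a * b) \<le> norm (ch t1 * (ch t2 - b)) + norm ((ch t1 - a) * b)"
    unfolding eq by (rule norm_triangle_ineq)
  also have "\<dots> = norm (ch t2 - b) + norm (ch t1 - a)"
    by (simp add: norm_mult nrm nb)
  finally have "norm (ch (t1 + t2) - a * b) < e" using t1 t2 by simp
  moreover have "\<bar>t1 + t2\<bar> < d" using t1 t2 by simp
  ultimately show "\<exists>t. \<bar>t\<bar> < d \<and> norm (ch t - a * b) < e" by blast
qed

lemma clus_cnj:
  assumes a: "a \<in> clus ch" shows "cnj a \<in> clus ch"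
  unfolding clus_def
proof (intro CollectI allI impI)
  fix d e :: real assume d: "d > 0" and e: "e > 0"
  obtain t where t: "\<bar>t\<bar> < d" "norm (ch t - a) < e"
    using a d e unfolding clus_def by blast
  have "norm (ch (-t) - cnj a) = norm (ch t - a)"
    by (metis chi_neg complex_cnj_diff complex_mod_cnj)
  then show "\<exists>t. \<bar>t\<bar> < d \<and> norm (ch t - cnj a) < e" using t by (intro exI[of _ "-t"]) auto
qed

lemma clus_one: "1 \<in> clus ch"
  unfolding clus_def using chi0 by (auto intro!: exI[of _ 0])

lemma clus_pow: "a \<in> clus ch \<Longrightarrow> a ^ n \<in> clus ch"
  by (induction n) (simp_all add: clus_one clus_mult)

lemma clus_subseq:
  assumes t: "\<And>k. \<bar>t k\<bar> < 1 / (real k + 1)"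
  shows "\<exists>l r. strict_mono r \<and> (\<lambda>k. ch (t (r k))) \<longlonglongrightarrow> l \<and> l \<in> clus ch"
proof -
  have "bounded (range (\<lambda>k. ch (t k)))"
    by (rule boundedI[of _ 1]) (auto simp: nrm)
  then obtain l r where r: "strict_mono r" and lim: "((\<lambda>k. ch (t k)) \<circ> r) \<longlonglongrightarrow> l"
    using bounded_imp_convergent_subsequence by blast
  have lim': "(\<lambda>k. ch (t (r k))) \<longlonglongrightarrow> l" using lim by (simp add: o_def)
  have "l \<in> clus ch"
    unfolding clus_def
  proof (intro CollectI allI impI)
    fix d e :: real assume d: "d > 0" and e: "e > 0"
    obtain N1 where N1: "\<forall>k\<ge>N1. norm (ch (t (r k)) - l) < e"
      using lim' e unfolding LIMSEQ_iff by blast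
    obtain N2 :: nat where N2: "1 / (real N2 + 1) < d" using small_index d by blast
    define k where "k = max N1 N2"
    have "r k \<ge> k" using r seq_suble by blast
    then have "1 / (real (r k) + 1) \<le> 1 / (real N2 + 1)"
      unfolding k_def by (intro divide_left_mono) auto
    then have "\<bar>t (r k)\<bar> < d" using t[of "r k"] N2 by linarith
    moreover have "norm (ch (t (r k)) - l) < e" using N1 unfolding k_def by simp
    ultimately show "\<exists>t'. \<bar>t'\<bar> < d \<and> norm (ch t' - l) < e" by blast
  qed
  then show ?thesis using r lim' by blast
qed

lemma clus_root:
  assumes a: "a \<in> clus ch" and n: "n \<ge> 1"
  shows "\<exists>v\<in>clus ch. v ^ n = a"
proof -
  have "\<forall>k::nat. \<exists>t. \<bar>t\<bar> < 1 / (real k + 1) \<and> norm (ch t - a) < 1 / (real k + 1)"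
    using a unfolding clus_def by auto
  then have "\<exists>t. \<forall>k::nat. \<bar>t k\<bar> < 1 / (real k + 1) \<and> norm (ch (t k) - a) < 1 / (real k + 1)"
    by (rule choice)
  then obtain t where t: "\<And>k. \<bar>t k\<bar> < 1 / (real k + 1)" "\<And>k. norm (ch (t k) - a) < 1 / (real k + 1)"
    by blast
  define u where "u k = t k / real n" for k
  have ub: "\<bar>u k\<bar> \<le> \<bar>t k\<bar>" for k
  proof -
    have "\<bar>t k\<bar> * 1 \<le> \<bar>t k\<bar> * real n" using n by (intro mult_left_mono) auto
    then show ?thesis using n unfolding u_def by (simp add: abs_div divide_le_eq)
  qed
  then have u: "\<bar>u k\<bar> < 1 / (real k + 1)" for k using t(1)[of k] ub[of k] by linarith
  obtain v r where r: "strict_mono r" and lim: "(\<lambda>k. ch (u (r k))) \<longlonglongrightarrow> v" and v: "v \<in> clus ch"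
    using clus_subseq[OF u] by blast
  have "(\<lambda>k. ch (u (r k)) ^ n) \<longlonglongrightarrow> v ^ n" using lim by (rule tendsto_power)
  moreover have "ch (u k) ^ n = ch (t k)" for k
    using chi_pow[of n "u k"] n unfolding u_def by simp
  ultimately have l1: "(\<lambda>k. ch (t (r k))) \<longlonglongrightarrow> v ^ n" by simp
  have "(\<lambda>k. ch (t k)) \<longlonglongrightarrow> a" using t(2) by (rule lim_from_bound)
  then have "((\<lambda>k. ch (t k)) \<circ> r) \<longlonglongrightarrow> a" using r by (rule LIMSEQ_subseq_LIMSEQ)
  then have "(\<lambda>k. ch (t (r k))) \<longlonglongrightarrow> a" by (simp add: o_def)
  with l1 have "v ^ n = a" using LIMSEQ_unique by blast
  then show ?thesis using v by blast
qed

lemma clus_cis_int: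
  assumes "cis g \<in> clus ch" shows "cis (of_int m * g) \<in> clus ch"
proof (cases "m \<ge> 0")
  case True
  then obtain n where "m = int n" by (metis nonneg_eq_int)
  then have "cis g ^ n = cis (real_of_int m * g)" by (simp add: Complex.DeMoivre)
  then show ?thesis using clus_pow[OF assms, of n] by simp
next
  case False
  define n where "n = nat (- m)"
  have "m = - int n" using False unfolding n_def by simp
  then have "cis (of_int m * g) = cnj (cis g ^ n)" by (simp add: Complex.DeMoivre cis_cnj)
  then show ?thesis using clus_cnj[OF clus_pow[OF assms, of n]] by simp
qed

lemma unit_cis: "norm w = 1 \<Longrightarrow> cis (Arg w) = w"
  using cis_Arg[of w] by (cases "w = 0") (auto simp: sgn_div_norm)

lemma clus_all:
  assumes ne1: "\<exists>w\<in>clus ch. w \<noteq> 1"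
  shows "cis p \<in> clus ch"
proof (cases "\<forall>h>0. \<exists>g. 0 < g \<and> g < h \<and> cis g \<in> clus ch")
  case True
  show ?thesis
  proof (rule clus_closed)
    fix e :: real assume e: "e > 0"
    obtain h where h: "h > 0" "\<forall>x. \<bar>x - p\<bar> < h \<longrightarrow> norm (cis x - cis p) < e"
      using cis_cont_pt[OF e] by blast
    obtain g where g: "0 < g" "g < h" "cis g \<in> clus ch" using True h(1) by blast
    define m where "m = floor (p / g)"
    have "of_int m \<le> p / g" "p / g < of_int m + 1" unfolding m_def by linarith+
    then have "of_int m * g \<le> p" "p < of_int m * g + g" using g(1) by (simp_all add: field_simps)
    then have "\<bar>of_int m * g - p\<bar> < h" using g by linarith
    then have "norm (cis (of_int m * g) - cis p) < e" using h by blast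
    then show "\<exists>v\<in>clus ch. norm (v - cis p) < e" using clus_cis_int[OF g(3)] by blast
  qed
next
  case False
  then obtain h where h: "h > 0" "\<And>g. 0 < g \<Longrightarrow> g < h \<Longrightarrow> cis g \<notin> clus ch" by blast
  define P where "P = {g. 0 < g \<and> cis g \<in> clus ch}"
  have P2: "2 * pi \<in> P" unfolding P_def using clus_one by simp
  then have Pne: "P \<noteq> {}" by blast
  have bdd: "bdd_below P" unfolding P_def by (rule bdd_belowI[of _ 0]) auto
  define a where "a = Inf P"
  have low: "\<And>g. g \<in> P \<Longrightarrow> a \<le> g" unfolding a_def using bdd by (simp add: cInf_lower)
  have hle: "h \<le> a" unfolding a_def
  proof (rule cInf_greatest[OF Pne])
    fix g assume "g \<in> P" then show "h \<le> g" using h unfolding P_def by force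
  qed
  then have apos: "a > 0" using h by simp
  have aP: "a \<in> P"
  proof (rule ccontr)
    assume naP: "a \<notin> P"
    obtain g1 where g1: "g1 \<in> P" "g1 < 2 * a" using cInf_lessD[OF Pne, of "2*a"] apos unfolding a_def by auto
    have "a < g1" using low[OF g1(1)] naP g1(1) by (cases "a = g1") auto
    then obtain g2 where g2: "g2 \<in> P" "g2 < g1" using cInf_lessD[OF Pne, of g1] unfolding a_def by auto
    have "cis (g1 - g2) = cis g1 * cnj (cis g2)" by (simp add: cis_cnj cis_mult)
    then have "cis (g1 - g2) \<in> clus ch" using g1 g2 clus_mult clus_cnj unfolding P_def by auto
    then have "g1 - g2 \<in> P" using g2 unfolding P_def by simp
    then have "a \<le> g1 - g2" by (rule low)
    moreover have "a \<le> g2" using low g2 by blast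
    ultimately show False using g1 by linarith
  qed
  have mult: "\<exists>k::int. g = of_int k * a" if "cis g \<in> clus ch" for g
  proof -
    define k where "k = floor (g / a)"
    have "of_int k \<le> g / a" "g / a < of_int k + 1" unfolding k_def by linarith+
    then have r: "0 \<le> g - of_int k * a" "g - of_int k * a < a" using apos by (simp_all add: field_simps)
    have "cis (g - of_int k * a) = cis g * cnj (cis (of_int k * a))" by (simp add: cis_cnj cis_mult)
    moreover have "cis (of_int k * a) \<in> clus ch" using aP clus_cis_int unfolding P_def by blast
    ultimately have "cis (g - of_int k * a) \<in> clus ch" using that clus_mult clus_cnj by auto
    then have "g - of_int k * a = 0"
      using r low[of "g - of_int k * a"] unfolding P_def by force
    then show ?thesis by auto
  qed
  obtain m where m: "2 * pi = of_int m * a" using mult[of "2*pi"] clus_one by auto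
  have "0 < 2 * pi" by simp
  then have "0 < of_int m * a" unfolding m .
  then have "0 < real_of_int m" using apos by (simp add: zero_less_mult_iff)
  then have "m > 0" by simp
  define n where "n = nat m"
  have n: "m = int n" "n \<ge> 1" using \<open>m > 0\<close> unfolding n_def by auto
  have ca: "cis a \<in> clus ch" using aP unfolding P_def by simp
  obtain v where v: "v \<in> clus ch" "v ^ n = cis a" using clus_root[OF ca n(2)] by blast
  have "cis (Arg v) = v" using clus_norm[OF v(1)] by (rule unit_cis)
  then obtain k where k: "Arg v = of_int k * a" using mult[of "Arg v"] v(1) by auto
  have "v ^ n = cis (real n * (of_int k * a))" using \<open>cis (Arg v) = v\<close> k by (metis Complex.DeMoivre)
  also have "real n * (of_int k * a) = 2 * pi * of_int k" using m n by simp
  also have "cis (2 * pi * of_int k) = 1" by simp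
  finally have "cis a = 1" using v by simp
  then have "cos a = 1" using cis.sel(1)[of a] by simp
  then obtain j :: int where j: "a = of_int j * 2 * pi" using cos_one_2pi_int by blast
  obtain w where w: "w \<in> clus ch" "w \<noteq> 1" using ne1 by blast
  have "cis (Arg w) = w" using clus_norm[OF w(1)] by (rule unit_cis)
  then obtain k2 where "Arg w = of_int k2 * a" using mult[of "Arg w"] w(1) by auto
  then have "Arg w = 2 * pi * of_int (k2 * j)" using j by simp
  then have "cis (Arg w) = 1" by simp
  then show ?thesis using \<open>cis (Arg w) = w\<close> w by simp
qed


lemma clus_ne1:
  assumes disc: "\<exists>e>0. \<forall>d>0. \<exists>h. \<bar>h\<bar> < d \<and> norm (ch h - 1) \<ge> e"
  shows "\<exists>w\<in>clus ch. w \<noteq> 1"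
proof -
  obtain e where e: "e > 0" "\<forall>d>0. \<exists>h. \<bar>h\<bar> < d \<and> norm (ch h - 1) \<ge> e" using disc by blast
  have "\<forall>k::nat. \<exists>h. \<bar>h\<bar> < 1 / (real k + 1) \<and> norm (ch h - 1) \<ge> e" using e(2) by simp
  then have "\<exists>h. \<forall>k::nat. \<bar>h k\<bar> < 1 / (real k + 1) \<and> norm (ch (h k) - 1) \<ge> e"
    by (rule choice)
  then obtain h where h: "\<And>k. \<bar>h k\<bar> < 1 / (real k + 1)" "\<And>k. norm (ch (h k) - 1) \<ge> e"
    by blast
  obtain l r where r: "strict_mono r" and lim: "(\<lambda>k. ch (h (r k))) \<longlonglongrightarrow> l" and l: "l \<in> clus ch"
    using clus_subseq[OF h(1)] by blast
  have "(\<lambda>k. norm (ch (h (r k)) - 1)) \<longlonglongrightarrow> norm (l - 1)"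
    by (intro tendsto_intros lim)
  then have "e \<le> norm (l - 1)" by (rule LIMSEQ_le_const) (use h(2) in auto)
  then have "l \<noteq> 1" using e(1) by auto
  then show ?thesis using l by blast
qed

lemma pos_approx:
  assumes w: "w \<in> clus ch" and ne1: "\<exists>w\<in>clus ch. w \<noteq> 1" and d: "d > 0" and e: "e > 0"
  shows "\<exists>t>0. t < d \<and> \<bar>Re (ch t) - Re w\<bar> < e"
proof -
  have reneg: "Re (ch (-t)) = Re (ch t)" for t by (simp add: chi_neg)
  obtain t where t: "\<bar>t\<bar> < d" "norm (ch t - w) < e/2" using clusE[OF w d, of "e/2"] e by auto
  have r1: "\<bar>Re (ch t) - Re w\<bar> < e/2" using t(2) abs_Re_le_cmod[of "ch t - w"] by simp
  show ?thesis
  proof (cases "t = 0")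
    case False
    have "Re (ch \<bar>t\<bar>) = Re (ch t)" using reneg[of t] by (cases "t \<ge> 0") auto
    then show ?thesis using False t(1) r1 e by (intro exI[of _ "\<bar>t\<bar>"]) auto
  next
    case True
    then have r0: "\<bar>1 - Re w\<bar> < e/2" using r1 chi0 by simp
    have m1: "-1 \<in> clus ch" using clus_all[OF ne1, of pi] by simp
    obtain t1 where t1: "\<bar>t1\<bar> < d/2" "norm (ch t1 - (-1)) < min (e/4) 1"
      using clusE[OF m1, of "d/2" "min (e/4) 1"] d e by auto
    have "t1 \<noteq> 0" using t1(2) chi0 by auto
    have n1: "norm (ch t1 - 1) \<le> 2" using norm_triangle_ineq4[of "ch t1" 1] nrm[of t1] by simp
    have "ch (2 * t1) - 1 = (ch t1 - (-1)) * (ch t1 - 1)"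
      using hom[of t1 t1] by (simp add: algebra_simps mult_2)
    then have "norm (ch (2 * t1) - 1) = norm (ch t1 - (-1)) * norm (ch t1 - 1)" by (simp add: norm_mult)
    also have "\<dots> \<le> (e/4) * 2" using t1(2) n1 e by (intro mult_mono) auto
    finally have "norm (ch (2 * t1) - 1) \<le> e/2" by simp
    then have "\<bar>Re (ch (2 * t1)) - 1\<bar> \<le> e/2" using abs_Re_le_cmod[of "ch (2*t1) - 1"] by simp
    moreover have "Re (ch \<bar>2 * t1\<bar>) = Re (ch (2 * t1))" using reneg[of "2*t1"] by (cases "t1 \<ge> 0") auto
    ultimately have "\<bar>Re (ch \<bar>2 * t1\<bar>) - Re w\<bar> < e" using r0 by linarith
    moreover have "0 < \<bar>2 * t1\<bar>" "\<bar>2 * t1\<bar> < d" using \<open>t1 \<noteq> 0\<close> t1(1) by auto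
    ultimately show ?thesis by blast
  qed
qed

end

context
  fixes c :: "real \<Rightarrow> complex"
  assumes cf: "cosine_function c"
begin

lemma c0: "c 0 = 1" using cf unfolding cosine_function_def by blast
lemma ceq: "c (s + t) + c (s - t) = 2 * c s * c t" using cf unfolding cosine_function_def by blast

lemma ceven: "c (- t) = c t"
  using ceq[of 0 t] c0 by simp

lemma cprod: "p = a + b \<Longrightarrow> q = a - b \<Longrightarrow> c a * c b = (c p + c q) / 2"
  using ceq[of a b] by simp

lemma cdbl: "c (2 * x) = 2 * c x ^ 2 - 1"
proof -
  have xx: "x + x = 2 * x" by simp
  have "c (2 * x) + 1 = 2 * c x * c x" using ceq[of x x] c0 unfolding xx by simp
  then have "c (2 * x) = 2 * c x * c x - 1" by (simp add: eq_diff_eq)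
  then show ?thesis by (simp add: power2_eq_square)
qed

lemma chi_construct:
  assumes t0: "c t0 ^ 2 \<noteq> 1"
  shows "\<exists>ch. (\<forall>x y. ch (x + y) = ch x * ch y) \<and> (\<forall>x. c x = (ch x + ch (- x)) / 2) \<and> ch 0 = 1"
proof -
  define S where "S = csqrt (1 - c t0 ^ 2)"
  have S2: "S ^ 2 = 1 - c t0 ^ 2" unfolding S_def by simp
  have Snz: "S \<noteq> 0" using S2 t0 by auto
  define s where "s x = (c (x - t0) - c (x + t0)) / (2 * S)" for x
  have ss: "s x * s y = (c (x - y) - c (x + y)) / 2" for x y
  proof -
    have P1: "c (x - t0) * c (y - t0) = (c (x + y - 2 * t0) + c (x - y)) / 2" by (rule cprod) auto
    have P2: "c (x - t0) * c (y + t0) = (c (x + y) + c (x - y - 2 * t0)) / 2" by (rule cprod) auto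
    have P3: "c (x + t0) * c (y - t0) = (c (x + y) + c (x - y + 2 * t0)) / 2" by (rule cprod) auto
    have P4: "c (x + t0) * c (y + t0) = (c (x + y + 2 * t0) + c (x - y)) / 2" by (rule cprod) auto
    have Q1: "c (x + y) * c (2 * t0) = (c (x + y + 2 * t0) + c (x + y - 2 * t0)) / 2" by (rule cprod) auto
    have Q2: "c (x - y) * c (2 * t0) = (c (x - y + 2 * t0) + c (x - y - 2 * t0)) / 2" by (rule cprod) auto
    define A where "A = (c (x - t0) - c (x + t0)) * (c (y - t0) - c (y + t0))"
    have "A = c (x - t0) * c (y - t0) - c (x - t0) * c (y + t0) - c (x + t0) * c (y - t0) + c (x + t0) * c (y + t0)"
      unfolding A_def by (simp add: algebra_simps)
    also have "\<dots> = (c (x + y - 2 * t0) + c (x + y + 2 * t0) + 2 * c (x - y) - 2 * c (x + y)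
        - c (x - y - 2 * t0) - c (x - y + 2 * t0)) / 2"
      unfolding P1 P2 P3 P4 by (simp add: field_simps)
    also have "\<dots> = c (x + y) * c (2 * t0) - c (x - y) * c (2 * t0) - c (x + y) + c (x - y)"
      unfolding Q1 Q2 by (simp add: field_simps)
    also have "\<dots> = (c (x + y) - c (x - y)) * (c (2 * t0) - 1)"
      by (simp add: algebra_simps)
    also have "c (2 * t0) - 1 = - 2 * S ^ 2" using cdbl[of t0] S2 by simp
    then have "(c (x + y) - c (x - y)) * (c (2 * t0) - 1) = (c (x + y) - c (x - y)) * (- 2 * S ^ 2)"
      by simp
    finally have A: "A = (c (x + y) - c (x - y)) * (- 2 * S ^ 2)" .
    have "s x * s y = A / (4 * S ^ 2)" unfolding s_def A_def using Snz by (simp add: field_simps power2_eq_square)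
    also have "\<dots> = (c (x - y) - c (x + y)) / 2" unfolding A using Snz by (simp add: field_simps power2_eq_square)
    finally show ?thesis .
  qed
  have sadd: "s (x + y) = s x * c y + c x * s y" for x y
  proof -
    have R1: "c (x - t0) * c y = (c (x + y - t0) + c (x - y - t0)) / 2" by (rule cprod) auto
    have R2: "c (x + t0) * c y = (c (x + y + t0) + c (x - y + t0)) / 2" by (rule cprod) auto
    have R3: "c x * c (y - t0) = (c (x + y - t0) + c (x - y + t0)) / 2" by (rule cprod) auto
    have R4: "c x * c (y + t0) = (c (x + y + t0) + c (x - y - t0)) / 2" by (rule cprod) auto
    have "s x * c y + c x * s y = ((c (x - t0) * c y - c (x + t0) * c y) + (c x * c (y - t0) - c x * c (y + t0))) / (2 * S)"
      unfolding s_def using Snz by (simp add: field_simps)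
    also have "\<dots> = (c (x + y - t0) - c (x + y + t0)) / (2 * S)"
      unfolding R1 R2 R3 R4 using Snz by (simp add: field_simps)
    finally show ?thesis unfolding s_def by simp
  qed
  have cadd: "c (x + y) = c x * c y - s x * s y" for x y
  proof -
    have e1: "c x * c y = (c (x + y) + c (x - y)) / 2" by (rule cprod) auto
    show ?thesis unfolding e1 ss by (simp add: field_simps)
  qed
  have s0: "s 0 = 0" unfolding s_def using ceven[of t0] by simp
  have sodd: "s (- x) = - s x" for x
  proof -
    have "c (- x - t0) = c (x + t0)" using ceven[of "x + t0"] by simp
    moreover have "c (- x + t0) = c (x - t0)" using ceven[of "x - t0"] by simp
    ultimately show ?thesis unfolding s_def using Snz by (simp add: field_simps)
  qed
  define ch where "ch x = c x + \<i> * s x" for x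
  have "ch (x + y) = ch x * ch y" for x y
  proof -
    have "ch (x + y) = (c x * c y - s x * s y) + \<i> * (s x * c y + c x * s y)"
      unfolding ch_def using cadd[of x y] sadd[of x y] by simp
    also have "\<dots> = ch x * ch y" unfolding ch_def by (simp add: algebra_simps)
    finally show ?thesis .
  qed
  moreover have "c x = (ch x + ch (- x)) / 2" for x
    unfolding ch_def sodd ceven by simp
  moreover have "ch 0 = 1" unfolding ch_def s0 c0 by simp
  ultimately show ?thesis by blast
qed


lemma chi_norm:
  assumes hom: "\<forall>x y. ch (x + y) = ch x * ch y" and cdef: "\<forall>x. c x = (ch x + ch (- x)) / 2"
    and ch0: "ch 0 = 1" and bnd: "bounded (range c)"
  shows "norm (ch x) = 1"
proof -
  have inv: "ch x * ch (- x) = 1" for x using hom[rule_format, of x "- x"] ch0 by simp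
  have pow: "ch (real n * x) = ch x ^ n" for n x
  proof (induction n)
    case 0 then show ?case by (simp add: ch0)
  next
    case (Suc n)
    have "ch (real (Suc n) * x) = ch (x + real n * x)" by (simp add: algebra_simps)
    also have "\<dots> = ch x * ch x ^ n" using Suc hom by simp
    finally show ?case by simp
  qed
  obtain B where B: "\<And>t. norm (c t) \<le> B" using bnd unfolding bounded_iff by blast
  have le1: "norm (ch x) \<le> 1" for x
  proof (rule ccontr)
    assume "\<not> norm (ch x) \<le> 1"
    then have r: "norm (ch x) > 1" by simp
    obtain n where n: "2 * B + 1 < norm (ch x) ^ n" using real_arch_pow[OF r] by blast
    have "norm (ch x * ch (- x)) = 1" using inv[of x] by simp
    then have "norm (ch x) * norm (ch (- x)) = 1" by (simp add: norm_mult)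
    moreover have "norm (ch x) \<noteq> 0" using r by auto
    ultimately have "norm (ch (- x)) = 1 / norm (ch x)" by (simp add: field_simps)
    moreover have "1 / norm (ch x) \<le> 1" using r by (simp add: divide_le_eq)
    ultimately have "norm (ch (- x)) \<le> 1" by simp
    then have m1: "norm (ch (- x) ^ n) \<le> 1" by (simp add: norm_power power_le_one)
    have cn: "c (real n * x) = (ch x ^ n + ch (- x) ^ n) / 2"
      using cdef pow[of n x] pow[of n "- x"] by simp
    have "norm (ch x ^ n) - norm (ch (- x) ^ n) \<le> norm (ch x ^ n + ch (- x) ^ n)"
      by (rule norm_diff_ineq)
    then have "norm (ch x) ^ n - 1 \<le> 2 * norm (c (real n * x))"
      using m1 unfolding cn by (simp add: norm_power norm_divide)
    then show False using B[of "real n * x"] n by linarith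
  qed
  have "norm (ch x * ch (- x)) = 1" using inv[of x] by simp
  then have p: "norm (ch x) * norm (ch (- x)) = 1" by (simp add: norm_mult)
  have "norm (ch x) * norm (ch (- x)) \<le> norm (ch x) * 1"
    using le1[of "- x"] by (intro mult_left_mono) auto
  then show ?thesis using le1[of x] p by simp
qed

end

theorem proposition3p1:
  fixes c :: "real \<Rightarrow> complex" and \<alpha> :: real
  assumes "cosine_function c"
    and "bounded (range c)"
    and "\<not> continuous_on UNIV c"
    and "-1 \<le> \<alpha>" and "\<alpha> \<le> 1"
  shows "\<exists>t :: nat \<Rightarrow> real. (\<forall>n. t n > 0) \<and> t \<longlonglongrightarrow> 0
           \<and> (\<lambda>n. c (t n)) \<longlonglongrightarrow> complex_of_real \<alpha>"
proof -
  note cf = assms(1)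
  obtain t0 where t0: "c t0 ^ 2 \<noteq> 1"
  proof (rule ccontr)
    assume "\<not> thesis"
    then have all: "\<And>t. c t ^ 2 = 1" using that by blast
    have "c x = 1" for x using cdbl[OF cf, of "x / 2"] all[of "x/2"] by simp
    then have "c = (\<lambda>_. 1)" by auto
    then show False using assms(3) by simp
  qed
  obtain ch where hom: "\<forall>x y. ch (x + y) = ch x * ch y" and cdef: "\<forall>x. c x = (ch x + ch (- x)) / 2"
    and ch0: "ch 0 = 1"
    using chi_construct[OF cf t0] by blast
  have nrm: "\<And>x. norm (ch x) = 1" using chi_norm[OF cf hom cdef ch0 assms(2)] by blast
  have hom': "\<And>x y. ch (x + y) = ch x * ch y" using hom by blast
  have cre: "c x = complex_of_real (Re (ch x))" for x
  proof -
    have "c x = (ch x + cnj (ch x)) / 2" using cdef chi_neg[OF hom' nrm, of x] by simp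
    then show ?thesis by (simp add: complex_add_cnj)
  qed
  have disc: "\<exists>e>0. \<forall>d>0. \<exists>h. \<bar>h\<bar> < d \<and> norm (ch h - 1) \<ge> e"
  proof (rule ccontr)
    assume "\<not> ?thesis"
    then have sm: "\<forall>e>0. \<exists>d>0. \<forall>h. \<bar>h\<bar> < d \<longrightarrow> norm (ch h - 1) < e"
      by (auto simp: not_le)
    have "continuous_on UNIV c"
      unfolding continuous_on_iff
    proof (intro ballI allI impI)
      fix x e :: real assume e: "e > 0"
      obtain d where d: "d > 0" "\<forall>h. \<bar>h\<bar> < d \<longrightarrow> norm (ch h - 1) < e" using sm e by blast
      show "\<exists>d>0. \<forall>x'\<in>UNIV. dist x' x < d \<longrightarrow> dist (c x') (c x) < e"
      proof (intro exI[of _ d] conjI ballI impI d(1))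
        fix x' assume "dist x' x < d"
        then have a1: "\<bar>x' - x\<bar> < d" "\<bar>x - x'\<bar> < d" by (auto simp: dist_real_def)
        have e1: "ch x' - ch x = ch x * (ch (x' - x) - 1)" using hom[rule_format, of x "x' - x"]
          by (simp add: algebra_simps)
        have e2: "ch (- x') - ch (- x) = ch (- x) * (ch (x - x') - 1)" using hom[rule_format, of "- x" "x - x'"]
          by (simp add: algebra_simps)
        have h2: "2 * (c x' - c x) = (ch x' - ch x) + (ch (- x') - ch (- x))" using cdef by (simp add: field_simps)
        have n1: "norm (2 * (c x' - c x)) \<le> norm (ch x' - ch x) + norm (ch (- x') - ch (- x))"
          unfolding h2 by (rule norm_triangle_ineq)
        have n2: "norm (2 * (c x' - c x)) = 2 * norm (c x' - c x)"
          by (subst norm_mult) simp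
        have "2 * norm (c x' - c x) \<le> norm (ch x' - ch x) + norm (ch (- x') - ch (- x))"
          using n1 unfolding n2 .
        then have "norm (c x' - c x) \<le> (norm (ch x' - ch x) + norm (ch (- x') - ch (- x))) / 2"
          by (simp add: field_simps)
        also have "\<dots> = (norm (ch (x' - x) - 1) + norm (ch (x - x') - 1)) / 2"
          unfolding e1 e2 by (simp add: norm_mult nrm)
        also have "\<dots> < e"
        proof -
          have "norm (ch (x' - x) - 1) < e" "norm (ch (x - x') - 1) < e" using d(2) a1 by auto
          then show ?thesis by (simp add: field_simps)
        qed
        finally show "dist (c x') (c x) < e" by (simp add: dist_norm)
      qed
    qed
    then show False using assms(3) by blast
  qed
  have ne1: "\<exists>w\<in>clus ch. w \<noteq> 1" using clus_ne1[OF hom' nrm disc] .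
  define w where "w = cis (arccos \<alpha>)"
  have w: "w \<in> clus ch" unfolding w_def by (rule clus_all[OF hom' nrm ne1])
  have rew: "Re w = \<alpha>" unfolding w_def using assms(4,5) by (simp add: cos_arccos)
  have "\<forall>n::nat. \<exists>t>0. t < 1 / (real n + 1) \<and> \<bar>Re (ch t) - Re w\<bar> < 1 / (real n + 1)"
    using pos_approx[OF hom' nrm w ne1] by simp
  then have "\<exists>t. \<forall>n::nat. t n > 0 \<and> t n < 1 / (real n + 1) \<and> \<bar>Re (ch (t n)) - Re w\<bar> < 1 / (real n + 1)"
    by (rule choice)
  then obtain t where t: "\<And>n. t n > 0" "\<And>n. t n < 1 / (real n + 1)"
    "\<And>n. \<bar>Re (ch (t n)) - \<alpha>\<bar> < 1 / (real n + 1)" using rew by blast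
  have "t \<longlonglongrightarrow> 0"
  proof (rule lim_from_bound)
    fix k show "norm (t k - 0) < 1 / (real k + 1)" using t(1)[of k] t(2)[of k] by simp
  qed
  moreover have "(\<lambda>n. c (t n)) \<longlonglongrightarrow> complex_of_real \<alpha>"
  proof (rule lim_from_bound)
    fix k
    have "c (t k) - complex_of_real \<alpha> = complex_of_real (Re (ch (t k)) - \<alpha>)" by (simp add: cre)
    then have "norm (c (t k) - complex_of_real \<alpha>) = \<bar>Re (ch (t k)) - \<alpha>\<bar>"
      by (simp only: norm_of_real)
    then show "norm (c (t k) - complex_of_real \<alpha>) < 1 / (real k + 1)" using t(3)[of k] by simp
  qed
  ultimately show ?thesis using t(1) by blast
qed

end
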